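(* For any node $V_j\in\mathrm{indir}(A,Y,\mathcal{G})$ and any $P\in\mathcal{M}(\mathcal{G})$, $$E_P[J_{P,\mathcal{G}}\mid V_j,\mathrm{pa}_{\mathcal{G}}(V_j)]-E_P[J_{P,\mathcal{G}}\mid\mathrm{pa}_{\mathcal{G}}(V_j)]=0.$$
   Context: $\mathcal{G}$ is a DAG with vertex set $\mathbf{V}$, $A,Y$ distinct vertices, $A$ a discrete point intervention. $\mathcal{M}(\mathcal{G})$ is the set of laws satisfying the local Markov property w.r.t. $\mathcal{G}$. $\mathrm{pa}_{\mathcal{G}}(V)$ and $\mathrm{an}_{\mathcal{G}}(V)$ denote the parents and ancestors of $V$. $\mathrm{indir}(A,Y,\mathcal{G})=\{V\in\mathbf{V}:V\in\mathrm{an}_{\mathcal{G}}(A)\setminus\{A\}\text{ and all causal paths between }V\text{ and }Y\text{ intersect }A\}$. $J_{P,\mathcal{G}}=J_{P,a,\mathcal{G}}=\frac{I_a(A)Y}{P(A=a\mid\mathrm{pa}_{\mathcal{G}}(A))}$. *)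

theory Defs
  imports "HOL-Probability.Probability"
begin

definition pa :: "('v \<times> 'v) set \<Rightarrow> 'v \<Rightarrow> 'v set" where
  "pa E v = {u. (u, v) \<in> E}"

definition an :: "('v \<times> 'v) set \<Rightarrow> 'v \<Rightarrow> 'v set" where
  "an E v = {u. (u, v) \<in> E\<^sup>*}"

definition de :: "('v \<times> 'v) set \<Rightarrow> 'v \<Rightarrow> 'v set" where
  "de E v = {w. (v, w) \<in> E\<^sup>*}"

definition nd :: "'v set \<Rightarrow> ('v \<times> 'v) set \<Rightarrow> 'v \<Rightarrow> 'v set" where
  "nd V E v = V - de E v"

definition is_dag :: "'v set \<Rightarrow> ('v \<times> 'v) set \<Rightarrow> bool" where
  "is_dag V E \<longleftrightarrow> finite V \<and> E \<subseteq> V \<times> V \<and> acyclic E"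

text \<open>indir(A,Y,G): proper ancestors v of A such that every causal (directed) path from
  v to Y passes through A, i.e. Y is not reachable from v by a directed path avoiding A.\<close>
definition indir :: "'v set \<Rightarrow> ('v \<times> 'v) set \<Rightarrow> 'v \<Rightarrow> 'v \<Rightarrow> 'v set" where
  "indir V E A Y = {v \<in> V. v \<in> an E A - {A} \<and> (v, Y) \<notin> (Restr E (V - {A}))\<^sup>*}"

definition gen :: "'a measure \<Rightarrow> ('v \<Rightarrow> 'a \<Rightarrow> real) \<Rightarrow> 'v set \<Rightarrow> 'a measure" where
  "gen M X S = sigma (space M) (\<Union>v\<in>S. {X v -` B \<inter> space M | B. B \<in> sets borel})"

text \<open>Local Markov property: each X v is conditionally independent of its
  non-descendants given its parents, expressed as
  P(X v \<in> B | X_nd(v)) = P(X v \<in> B | X_pa(v)) a.s. for all Borel B.\<close>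
definition local_markov ::
  "'a measure \<Rightarrow> 'v set \<Rightarrow> ('v \<times> 'v) set \<Rightarrow> ('v \<Rightarrow> 'a \<Rightarrow> real) \<Rightarrow> bool" where
  "local_markov M V E X \<longleftrightarrow>
     (\<forall>v\<in>V. \<forall>B\<in>sets borel.
        AE \<omega> in M. real_cond_exp M (gen M X (nd V E v)) (\<lambda>\<omega>. indicator B (X v \<omega>)) \<omega>
                   = real_cond_exp M (gen M X (pa E v)) (\<lambda>\<omega>. indicator B (X v \<omega>)) \<omega>)"

definition propensity :: "'a measure \<Rightarrow> ('v \<times> 'v) set \<Rightarrow> ('v \<Rightarrow> 'a \<Rightarrow> real) \<Rightarrow> 'v \<Rightarrow> real \<Rightarrow> 'a \<Rightarrow> real" where
  "propensity M E X A a = real_cond_exp M (gen M X (pa E A)) (\<lambda>\<omega>. indicator {a} (X A \<omega>))"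

definition J_fun :: "'a measure \<Rightarrow> ('v \<times> 'v) set \<Rightarrow> ('v \<Rightarrow> 'a \<Rightarrow> real) \<Rightarrow> 'v \<Rightarrow> real \<Rightarrow> 'v \<Rightarrow> 'a \<Rightarrow> real" where
  "J_fun M E X A a Y = (\<lambda>\<omega>. indicator {a} (X A \<omega>) * X Y \<omega> / propensity M E X A a \<omega>)"

end

theory Submission
  imports Defs
begin



context prob_space
begin

lemma sfs_any: "subalgebra M G \<Longrightarrow> sigma_finite_subalgebra M G"
  by (simp add: finite_measure_axioms finite_measure_subalgebra.intro
      finite_measure_subalgebra_axioms_def finite_measure_subalgebra_is_sigma_finite)

lemma integrable_bdd_mult:
  fixes f g :: "'a \<Rightarrow> real"
  assumes "integrable M f" "g \<in> borel_measurable M" "AE x in M. \<bar>g x\<bar> \<le> 1"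
  shows "integrable M (\<lambda>x. g x * f x)"
proof (rule Bochner_Integration.integrable_bound[OF assms(1)])
  show "(\<lambda>x. g x * f x) \<in> borel_measurable M" using assms borel_measurable_integrable by measurable
  show "AE x in M. norm (g x * f x) \<le> norm (f x)"
    using assms(3) by eventually_elim (auto simp: abs_mult mult_left_le_one_le)
qed

lemma integrable_bdd:
  fixes g :: "'a \<Rightarrow> real"
  assumes "g \<in> borel_measurable M" "AE x in M. \<bar>g x\<bar> \<le> B"
  shows "integrable M g"
  using assms by (intro integrable_const_bound[where B=B]) auto

lemma ce_ind_bounds:
  assumes H: "subalgebra M H" and C: "C \<in> sets M"
  shows "AE x in M. 0 \<le> real_cond_exp M H (indicator C) x \<and> real_cond_exp M H (indicator C) x \<le> 1"
proof -
  interpret H: sigma_finite_subalgebra M H using sfs_any[OF H] .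
  have "AE x in M. 0 \<le> real_cond_exp M H (indicator C) x"
    by (rule H.real_cond_exp_pos) (use C in auto)
  moreover have "AE x in M. real_cond_exp M H (indicator C) x \<le> real_cond_exp M H (\<lambda>_. 1) x"
    by (rule H.real_cond_exp_mono) (use C in \<open>auto split: split_indicator intro!: integrable_bdd[where B=1]\<close>)
  moreover have "AE x in M. real_cond_exp M H (\<lambda>_. 1) x = 1"
    by (rule H.real_cond_exp_F_meas) auto
  ultimately show ?thesis by eventually_elim auto
qed

lemma ce_ind_abs:
  assumes H: "subalgebra M H" and C: "C \<in> sets M"
  shows "AE x in M. \<bar>real_cond_exp M H (indicator C) x\<bar> \<le> 1"
  using ce_ind_bounds[OF assms] by eventually_elim auto

definition wC :: "'a measure \<Rightarrow> 'a set \<Rightarrow> 'a \<Rightarrow> real" where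
  "wC H C = (\<lambda>x. indicator C x - real_cond_exp M H (indicator C) x)"

lemma wC_meas: "C \<in> sets M \<Longrightarrow> wC H C \<in> borel_measurable M"
  unfolding wC_def by (intro borel_measurable_diff borel_measurable_indicator borel_measurable_cond_exp2)

lemma wC_bdd:
  assumes H: "subalgebra M H" and C: "C \<in> sets M"
  shows "AE x in M. \<bar>wC H C x\<bar> \<le> 1"
  using ce_ind_bounds[OF assms] by eventually_elim (auto simp: wC_def split: split_indicator)

lemma integrable_wC:
  assumes H: "subalgebra M H" and C: "C \<in> sets M" and f: "integrable M f"
  shows "integrable M (\<lambda>x. f x * wC H C x)"
  using integrable_bdd_mult[OF f wC_meas[OF C] wC_bdd[OF H C]] by (simp add: mult.commute)

definition orth :: "'a measure \<Rightarrow> 'a measure \<Rightarrow> ('a \<Rightarrow> real) \<Rightarrow> bool" where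
  "orth G H f \<longleftrightarrow> (\<forall>C\<in>sets G. (\<integral>x. f x * wC H C x \<partial>M) = 0)"

lemma cond_swap:
  assumes H: "subalgebra M H" and f: "integrable M f" and C: "C \<in> sets M"
  shows "(\<integral>x. indicator C x * real_cond_exp M H f x \<partial>M) = (\<integral>x. real_cond_exp M H (indicator C) x * f x \<partial>M)"
proof -
  interpret H: sigma_finite_subalgebra M H using sfs_any[OF H] .
  have fm[measurable]: "f \<in> borel_measurable M" using f by auto
  have ie: "integrable M (real_cond_exp M H f)" using H.real_cond_exp_int(1)[OF f] .
  have "(\<integral>x. indicator C x * real_cond_exp M H f x \<partial>M) = (\<integral>x. real_cond_exp M H f x * indicator C x \<partial>M)"
    by (simp add: mult.commute)
  also have "\<dots> = (\<integral>x. real_cond_exp M H f x * real_cond_exp M H (indicator C) x \<partial>M)"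
    by (rule H.real_cond_exp_intg(2)[symmetric])
       (use C ie in \<open>auto intro: integrable_real_mult_indicator\<close>)
  also have "\<dots> = (\<integral>x. real_cond_exp M H (indicator C) x * real_cond_exp M H f x \<partial>M)"
    by (simp add: mult.commute)
  also have "\<dots> = (\<integral>x. real_cond_exp M H (indicator C) x * f x \<partial>M)"
    by (rule H.real_cond_exp_intg(2))
       (use C f ce_ind_abs[OF H C] in \<open>auto intro!: integrable_bdd_mult\<close>)
  finally show ?thesis .
qed

lemma orth_ce:
  assumes G: "subalgebra M G" and H: "subalgebra M H" and HG: "sets H \<subseteq> sets G"
    and f: "integrable M f" and o: "orth G H f"
  shows "AE x in M. real_cond_exp M G f x = real_cond_exp M H f x"
proof -
  interpret G: sigma_finite_subalgebra M G using sfs_any[OF G] .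
  interpret H: sigma_finite_subalgebra M H using sfs_any[OF H] .
  have fm[measurable]: "f \<in> borel_measurable M" using f by auto
  show ?thesis
  proof (rule G.real_cond_exp_charact)
    show "integrable M (real_cond_exp M H f)" using H.real_cond_exp_int(1)[OF f] .
    show "real_cond_exp M H f \<in> borel_measurable G"
      using borel_measurable_cond_exp HG G H
      by (metis measurable_from_subalg subalgebra_def)
    fix C assume C: "C \<in> sets G"
    then have CM: "C \<in> sets M" using G unfolding subalgebra_def by auto
    have i1: "integrable M (\<lambda>x. f x * indicator C x)" using CM f by (rule integrable_real_mult_indicator)
    have i2: "integrable M (\<lambda>x. f x * real_cond_exp M H (indicator C) x)"
      using integrable_bdd_mult[OF f _ ce_ind_abs[OF H CM]] CM by (simp add: mult.commute)
    have "0 = (\<integral>x. f x * wC H C x \<partial>M)" using o C unfolding orth_def by auto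
    also have "\<dots> = (\<integral>x. f x * indicator C x - f x * real_cond_exp M H (indicator C) x \<partial>M)"
      unfolding wC_def by (simp add: right_diff_distrib)
    also have "\<dots> = (\<integral>x. f x * indicator C x \<partial>M) - (\<integral>x. f x * real_cond_exp M H (indicator C) x \<partial>M)"
      using i1 i2 by simp
    finally have eq: "(\<integral>x. f x * indicator C x \<partial>M) = (\<integral>x. real_cond_exp M H (indicator C) x * f x \<partial>M)"
      by (simp add: mult.commute)
    have "(\<integral>x\<in>C. f x \<partial>M) = (\<integral>x. f x * indicator C x \<partial>M)"
      by (simp add: set_lebesgue_integral_def mult.commute)
    also have "\<dots> = (\<integral>x. indicator C x * real_cond_exp M H f x \<partial>M)"
      using eq cond_swap[OF H f CM] by simp
    also have "\<dots> = (\<integral>x\<in>C. real_cond_exp M H f x \<partial>M)"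
      by (simp add: set_lebesgue_integral_def)
    finally show "(\<integral>x\<in>C. f x \<partial>M) = (\<integral>x\<in>C. real_cond_exp M H f x \<partial>M)" .
  qed (use f in auto)
qed


lemma orth_cong:
  assumes "\<And>x. x \<in> space M \<Longrightarrow> f x = g x" "orth G H f"
  shows "orth G H g"
proof -
  have "\<And>C. (\<integral>x. f x * wC H C x \<partial>M) = (\<integral>x. g x * wC H C x \<partial>M)"
    using assms(1) by (intro Bochner_Integration.integral_cong) auto
  then show ?thesis using assms(2) unfolding orth_def by simp
qed

lemma orth_add:
  assumes G: "subalgebra M G" and H: "subalgebra M H"
    and f: "integrable M f" and g: "integrable M g" and of: "orth G H f" and og: "orth G H g"
  shows "orth G H (\<lambda>x. f x + g x)"
  unfolding orth_def
proof
  fix C assume C: "C \<in> sets G"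
  then have CM: "C \<in> sets M" using G unfolding subalgebra_def by auto
  have "(\<integral>x. (f x + g x) * wC H C x \<partial>M) = (\<integral>x. f x * wC H C x + g x * wC H C x \<partial>M)"
    by (simp add: distrib_right)
  also have "\<dots> = (\<integral>x. f x * wC H C x \<partial>M) + (\<integral>x. g x * wC H C x \<partial>M)"
    using integrable_wC[OF H CM f] integrable_wC[OF H CM g] by simp
  also have "\<dots> = 0" using of og C unfolding orth_def by simp
  finally show "(\<integral>x. (f x + g x) * wC H C x \<partial>M) = 0" .
qed

lemma orth_cmult:
  assumes "orth G H f"
  shows "orth G H (\<lambda>x. c * f x)"
  using assms unfolding orth_def by (simp add: mult.assoc)

lemma orth_zero: "orth G H (\<lambda>x. 0)"
  unfolding orth_def by simp

lemma orth_sum: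
  assumes G: "subalgebra M G" and H: "subalgebra M H" and I: "finite I"
    and "\<And>i. i \<in> I \<Longrightarrow> integrable M (f i)" "\<And>i. i \<in> I \<Longrightarrow> orth G H (f i)"
  shows "orth G H (\<lambda>x. \<Sum>i\<in>I. f i x)"
  using I assms(4,5)
proof (induction I rule: finite_induct)
  case empty
  then show ?case using orth_zero by simp
next
  case (insert i I)
  have "orth G H (\<lambda>x. f i x + (\<Sum>i\<in>I. f i x))"
    by (rule orth_add[OF G H]) (use insert in auto)
  then show ?case using insert by simp
qed

lemma orth_one:
  assumes G: "subalgebra M G" and H: "subalgebra M H"
  shows "orth G H (\<lambda>x. 1)"
  unfolding orth_def
proof
  fix C assume C: "C \<in> sets G"
  then have CM: "C \<in> sets M" using G unfolding subalgebra_def by auto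
  interpret H: sigma_finite_subalgebra M H using sfs_any[OF H] .
  have ii: "integrable M (indicator C :: 'a \<Rightarrow> real)"
    using CM by (intro integrable_bdd[where B=1]) (auto split: split_indicator)
  have "(\<integral>x. 1 * wC H C x \<partial>M) = (\<integral>x. indicator C x \<partial>M) - (\<integral>x. real_cond_exp M H (indicator C) x \<partial>M)"
    unfolding wC_def using ii H.real_cond_exp_int(1)[OF ii] by simp
  also have "\<dots> = 0" using H.real_cond_exp_int(2)[OF ii] by simp
  finally show "(\<integral>x. 1 * wC H C x \<partial>M) = 0" .
qed

lemma orth_lim:
  assumes G: "subalgebra M G" and H: "subalgebra M H"
    and f: "integrable M f" and s: "\<And>i. integrable M (s i)" and os: "\<And>i. orth G H (s i)"
    and lim: "\<And>x. x \<in> space M \<Longrightarrow> (\<lambda>i. s i x) \<longlonglongrightarrow> f x"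
    and w: "integrable M w" and bd: "\<And>i. AE x in M. \<bar>s i x\<bar> \<le> w x"
  shows "orth G H f"
  unfolding orth_def
proof
  fix C assume C: "C \<in> sets G"
  then have CM: "C \<in> sets M" using G unfolding subalgebra_def by auto
  have "(\<lambda>i. \<integral>x. s i x * wC H C x \<partial>M) \<longlonglongrightarrow> (\<integral>x. f x * wC H C x \<partial>M)"
  proof (rule integral_dominated_convergence[where w=w])
    show "(\<lambda>x. f x * wC H C x) \<in> borel_measurable M" using integrable_wC[OF H CM f] by auto
    show "\<And>i. (\<lambda>x. s i x * wC H C x) \<in> borel_measurable M" using integrable_wC[OF H CM s] by auto
    show "integrable M w" by fact
    show "AE x in M. (\<lambda>i. s i x * wC H C x) \<longlonglongrightarrow> f x * wC H C x"
      using lim by (intro AE_I2 tendsto_mult tendsto_const) auto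
    fix i
    show "AE x in M. norm (s i x * wC H C x) \<le> w x"
      using bd[of i] wC_bdd[OF H CM]
      proof eventually_elim
        case (elim x)
        have "\<bar>s i x\<bar> * \<bar>wC H C x\<bar> \<le> \<bar>s i x\<bar> * 1"
          using elim by (intro mult_left_mono) auto
        then show ?case using elim by (simp add: abs_mult)
      qed
  qed
  moreover have "(\<lambda>i. \<integral>x. s i x * wC H C x \<partial>M) = (\<lambda>i. 0)" using os C unfolding orth_def by auto
  ultimately show "(\<integral>x. f x * wC H C x \<partial>M) = 0"
    using LIMSEQ_unique tendsto_const by metis
qed


lemma integrable_ind: "C \<in> sets M \<Longrightarrow> integrable M (indicator C :: 'a \<Rightarrow> real)"
  by (intro integrable_bdd[where B=1]) (auto split: split_indicator)

lemma orth_sets: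
  assumes G: "subalgebra M G" and H: "subalgebra M H"
    and Pi: "Int_stable P" and PP: "P \<subseteq> Pow (space M)" and PM: "sigma_sets (space M) P \<subseteq> sets M"
    and bas: "\<And>S. S \<in> P \<Longrightarrow> orth G H (indicator S)"
    and S: "S \<in> sigma_sets (space M) P"
  shows "orth G H (indicator S)"
  using Pi PP S
proof (induction rule: sigma_sets_induct_disjoint)
  case (basic A)
  then show ?case using bas by auto
next
  case empty
  then show ?case using orth_zero by simp
next
  case (compl A)
  have AM: "A \<in> sets M" using compl PM by auto
  have m1: "orth G H (\<lambda>x. (-1) * indicator A x)" by (rule orth_cmult) (rule compl(2))
  have "orth G H (\<lambda>x. 1 + (-1) * indicator A x)"
    by (rule orth_add[OF G H]) (use orth_one[OF G H] m1 integrable_ind[OF AM] in auto)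
  then show ?case
    by (rule orth_cong[rotated]) (auto split: split_indicator)
next
  case (union A)
  have AM: "\<And>i. A i \<in> sets M" using union PM by auto
  show ?case
  proof (rule orth_lim[OF G H _ _ _ _ integrable_bdd[where B=1 and g="\<lambda>_. 1"]])
    show "integrable M (indicator (\<Union>i. A i) :: 'a \<Rightarrow> real)"
      using AM by (intro integrable_ind) auto
    show "\<And>i. integrable M (\<lambda>x. \<Sum>j<i. indicator (A j) x :: real)"
      using AM integrable_ind by auto
    show "\<And>i. orth G H (\<lambda>x. \<Sum>j<i. indicator (A j) x)"
      by (rule orth_sum[OF G H]) (use AM integrable_ind union(3) in auto)
    show "\<And>x. x \<in> space M \<Longrightarrow> (\<lambda>i. \<Sum>j<i. indicator (A j) x) \<longlonglongrightarrow> (indicator (\<Union>i. A i) x :: real)"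
      using indicator_sums[of A] union(1) unfolding sums_def disjoint_family_on_def by auto
    fix i
    show "AE x in M. \<bar>\<Sum>j<i. indicator (A j) x :: real\<bar> \<le> 1"
    proof (rule AE_I2)
      fix x
      have su: "(\<lambda>j. indicator (A j) x :: real) sums indicator (\<Union>i. A i) x"
        using indicator_sums[of A] union(1) unfolding disjoint_family_on_def by auto
      have "(\<Sum>j<i. indicator (A j) x :: real) \<le> suminf (\<lambda>j. indicator (A j) x)"
        by (rule sum_le_suminf) (use su sums_summable in auto)
      also have "\<dots> \<le> 1" using sums_unique[OF su, symmetric] by (auto split: split_indicator)
      finally show "\<bar>\<Sum>j<i. indicator (A j) x :: real\<bar> \<le> 1" by (simp add: sum_nonneg)
    qed
  qed auto
qed

lemma orth_meas:
  assumes G: "subalgebra M G" and H: "subalgebra M H"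
    and Pi: "Int_stable P" and PP: "P \<subseteq> Pow (space M)" and PM: "sigma_sets (space M) P \<subseteq> sets M"
    and bas: "\<And>S. S \<in> P \<Longrightarrow> orth G H (indicator S)"
    and L: "space L = space M" "sets L = sigma_sets (space M) P"
    and f: "integrable M f" and fL: "f \<in> borel_measurable L"
  shows "orth G H f"
proof -
  have LM: "subalgebra M L" unfolding subalgebra_def using L PM by auto
  obtain F where F: "\<And>i. simple_function L (F i)" "\<And>x. x \<in> space L \<Longrightarrow> (\<lambda>i. F i x) \<longlonglongrightarrow> f x"
    "\<And>i x. x \<in> space L \<Longrightarrow> dist (F i x) 0 \<le> 2 * dist (f x) 0"
    using borel_measurable_implies_sequence_metric[OF fL, of 0] by blast
  have FM: "F i \<in> borel_measurable M" for i
    using borel_measurable_simple_function[OF F(1)] measurable_from_subalg[OF LM] by blast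
  have Fi: "integrable M (F i)" for i
  proof (rule Bochner_Integration.integrable_bound[of M "\<lambda>x. 2 * f x"])
    show "integrable M (\<lambda>x. 2 * f x)" using f by auto
    show "AE x in M. norm (F i x) \<le> norm (2 * f x)" using F(3) L by (intro AE_I2) (auto simp: abs_mult)
  qed (rule FM)
  show ?thesis
  proof (rule orth_lim[OF G H f Fi _ _ _ ])
    fix i
    let ?R = "\<lambda>x. \<Sum>y\<in>F i ` space L. y * indicator (F i -` {y} \<inter> space L) x"
    have sets_in: "F i -` {y} \<inter> space L \<in> sigma_sets (space M) P" for y
      using simple_functionD(2)[OF F(1)] L by auto
    have "orth G H ?R"
    proof (rule orth_sum[OF G H])
      show "finite (F i ` space L)" using simple_functionD(1)[OF F(1)] .
      fix y
      show "integrable M (\<lambda>x. y * indicator (F i -` {y} \<inter> space L) x)"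
        using sets_in[of y] PM integrable_ind by auto
      show "orth G H (\<lambda>x. y * indicator (F i -` {y} \<inter> space L) x)"
        by (rule orth_cmult, rule orth_sets[OF G H Pi PP PM bas sets_in])
    qed
    then show "orth G H (F i)"
    proof (rule orth_cong[rotated])
      fix x assume "x \<in> space M"
      have eq: "F i x = (\<Sum>y\<in>F i ` space L. indicator (F i -` {y} \<inter> space L) x *\<^sub>R y)"
        by (rule simple_function_indicator_representation_banach[OF F(1)]) (use \<open>x \<in> space M\<close> L in auto)
      show "?R x = F i x"
        unfolding eq real_scaleR_def by (rule sum.cong[OF refl]) (rule mult.commute)
    qed
  next
    show "\<And>x. x \<in> space M \<Longrightarrow> (\<lambda>i. F i x) \<longlonglongrightarrow> f x" using F(2) L by auto
    show "integrable M (\<lambda>x. 2 * \<bar>f x\<bar>)" using f by auto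
    show "\<And>i. AE x in M. \<bar>F i x\<bar> \<le> 2 * \<bar>f x\<bar>" using F(3) L by (intro AE_I2) auto
  qed
qed

lemma bdd_ind_mult:
  assumes "AE x in M. \<bar>g x\<bar> \<le> (1::real)"
  shows "AE x in M. \<bar>indicator S x * g x\<bar> \<le> 1"
  using assms by eventually_elim (auto split: split_indicator)

lemma orth_prod:
  assumes G: "subalgebra M G" and H: "subalgebra M H" and HG: "sets H \<subseteq> sets G"
    and B: "B \<in> sets M" and hyp: "AE x in M. real_cond_exp M G (indicator B) x = real_cond_exp M H (indicator B) x"
    and D: "D \<in> sets H"
  shows "orth G H (indicator (B \<inter> D))"
  unfolding orth_def
proof
  interpret G: sigma_finite_subalgebra M G using sfs_any[OF G] .
  interpret H: sigma_finite_subalgebra M H using sfs_any[OF H] .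
  fix C assume C: "C \<in> sets G"
  then have CM: "C \<in> sets M" using G unfolding subalgebra_def by auto
  have DG: "D \<in> sets G" using D HG by auto
  have DM: "D \<in> sets M" using DG G unfolding subalgebra_def by auto
  define e where "e = real_cond_exp M H (indicator B)"
  define c where "c = real_cond_exp M H (indicator C)"
  have eb: "AE x in M. \<bar>e x\<bar> \<le> 1" unfolding e_def using ce_ind_abs[OF H B] .
  have cb: "AE x in M. \<bar>c x\<bar> \<le> 1" unfolding c_def using ce_ind_abs[OF H CM] .
  have eH[measurable]: "e \<in> borel_measurable H" unfolding e_def by (rule borel_measurable_cond_exp)
  have cH[measurable]: "c \<in> borel_measurable H" unfolding c_def by (rule borel_measurable_cond_exp)
  have eM[measurable]: "e \<in> borel_measurable M" unfolding e_def by (rule borel_measurable_cond_exp2)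
  have cM[measurable]: "c \<in> borel_measurable M" unfolding c_def by (rule borel_measurable_cond_exp2)
  have [measurable]: "B \<in> sets M" "C \<in> sets M" "D \<in> sets M" "D \<in> sets H" "C \<in> sets G" "D \<in> sets G"
    using B CM DM D C DG by auto
  have one: "AE x in M. \<bar>1::real\<bar> \<le> 1" by simp
  have "(\<integral>x. indicator (B \<inter> D) x * indicator C x \<partial>M) = (\<integral>x. indicator (D \<inter> C) x * (indicator B x :: real) \<partial>M)"
    by (intro Bochner_Integration.integral_cong) (auto split: split_indicator)
  also have "\<dots> = (\<integral>x. indicator (D \<inter> C) x * real_cond_exp M G (indicator B) x \<partial>M)"
  proof (rule G.real_cond_exp_intg(2)[symmetric])
    have "AE x in M. \<bar>indicator (D \<inter> C) x * (indicator B x * 1) :: real\<bar> \<le> 1"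
      by (intro bdd_ind_mult one)
    then show "integrable M (\<lambda>x. indicator (D \<inter> C) x * (indicator B x :: real))"
      by (intro integrable_bdd) auto
  qed auto
  also have "\<dots> = (\<integral>x. indicator (D \<inter> C) x * e x \<partial>M)"
    unfolding e_def using hyp by (intro integral_cong_AE) auto
  also have "\<dots> = (\<integral>x. (indicator D x * e x) * indicator C x \<partial>M)"
    by (intro Bochner_Integration.integral_cong) (auto split: split_indicator)
  also have "\<dots> = (\<integral>x. (indicator D x * e x) * c x \<partial>M)"
    unfolding c_def
  proof (rule H.real_cond_exp_intg(2)[symmetric])
    have "AE x in M. \<bar>indicator C x * (indicator D x * e x) :: real\<bar> \<le> 1"
      by (intro bdd_ind_mult eb)
    then show "integrable M (\<lambda>x. (indicator D x * e x) * (indicator C x :: real))"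
      by (intro integrable_bdd) (auto simp: mult.commute)
  qed auto
  also have "\<dots> = (\<integral>x. (indicator D x * c x) * e x \<partial>M)"
    by (intro Bochner_Integration.integral_cong) auto
  also have "\<dots> = (\<integral>x. (indicator D x * c x) * indicator B x \<partial>M)"
    unfolding e_def
  proof (rule H.real_cond_exp_intg(2))
    have "AE x in M. \<bar>indicator B x * (indicator D x * c x) :: real\<bar> \<le> 1"
      by (intro bdd_ind_mult cb)
    then show "integrable M (\<lambda>x. (indicator D x * c x) * (indicator B x :: real))"
      by (intro integrable_bdd) (auto simp: mult.commute)
  qed auto
  also have "\<dots> = (\<integral>x. indicator (B \<inter> D) x * c x \<partial>M)"
    by (intro Bochner_Integration.integral_cong) (auto split: split_indicator)
  finally have eq: "(\<integral>x. indicator (B \<inter> D) x * (indicator C x :: real) \<partial>M) = (\<integral>x. indicator (B \<inter> D) x * c x \<partial>M)" .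
  have i1: "integrable M (\<lambda>x. indicator (B \<inter> D) x * indicator C x :: real)"
  proof -
    have "AE x in M. \<bar>indicator (B \<inter> D) x * (indicator C x * 1) :: real\<bar> \<le> 1"
      by (intro bdd_ind_mult one)
    then show ?thesis by (intro integrable_bdd) auto
  qed
  have i2: "integrable M (\<lambda>x. indicator (B \<inter> D) x * c x :: real)"
  proof -
    have "AE x in M. \<bar>indicator (B \<inter> D) x * c x :: real\<bar> \<le> 1"
      by (intro bdd_ind_mult cb)
    then show ?thesis by (intro integrable_bdd) auto
  qed
  have "(\<integral>x. indicator (B \<inter> D) x * wC H C x \<partial>M)
      = (\<integral>x. indicator (B \<inter> D) x * indicator C x - indicator (B \<inter> D) x * c x \<partial>M)"
    unfolding wC_def c_def by (simp add: right_diff_distrib)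
  also have "\<dots> = 0" using i1 i2 eq by simp
  finally show "(\<integral>x. indicator (B \<inter> D) x * wC H C x \<partial>M) = 0" .
qed

lemma ci_ext:
  assumes G: "subalgebra M G" and H: "subalgebra M H" and HG: "sets H \<subseteq> sets G"
    and K: "K \<subseteq> sets M" "Int_stable K"
    and hyp: "\<And>B. B \<in> K \<Longrightarrow> AE x in M. real_cond_exp M G (indicator B) x = real_cond_exp M H (indicator B) x"
    and L: "space L = space M" "sets L = sigma_sets (space M) {B \<inter> D | B D. B \<in> K \<and> D \<in> sets H}"
    and f: "integrable M f" and fL: "f \<in> borel_measurable L"
  shows "AE x in M. real_cond_exp M G f x = real_cond_exp M H f x"
proof (rule orth_ce[OF G H HG f])
  let ?P = "{B \<inter> D | B D. B \<in> K \<and> D \<in> sets H}"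
  have HM: "sets H \<subseteq> sets M" using H unfolding subalgebra_def by auto
  have PM0: "?P \<subseteq> sets M" using K HM by auto
  show "orth G H f"
  proof (rule orth_meas[OF G H _ _ _ _ L f fL])
    show "Int_stable ?P"
      unfolding Int_stable_def
    proof (intro ballI)
      fix a b assume "a \<in> ?P" "b \<in> ?P"
      then obtain B1 D1 B2 D2 where "a = B1 \<inter> D1" "b = B2 \<inter> D2" "B1 \<in> K" "B2 \<in> K" "D1 \<in> sets H" "D2 \<in> sets H"
        by auto
      moreover have "B1 \<inter> B2 \<in> K" using K(2) \<open>B1 \<in> K\<close> \<open>B2 \<in> K\<close> unfolding Int_stable_def by auto
      moreover have "D1 \<inter> D2 \<in> sets H" using \<open>D1 \<in> sets H\<close> \<open>D2 \<in> sets H\<close> by (rule sets.Int)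
      moreover have "a \<inter> b = (B1 \<inter> B2) \<inter> (D1 \<inter> D2)" using \<open>a = B1 \<inter> D1\<close> \<open>b = B2 \<inter> D2\<close> by blast
      ultimately show "a \<inter> b \<in> ?P" by blast
    qed
    show "?P \<subseteq> Pow (space M)" using PM0 sets.sets_into_space by blast
    show "sigma_sets (space M) ?P \<subseteq> sets M" by (rule sets.sigma_sets_subset[OF PM0])
    fix S assume "S \<in> ?P"
    then obtain B D where "S = B \<inter> D" "B \<in> K" "D \<in> sets H" by auto
    moreover have "B \<in> sets M" using \<open>B \<in> K\<close> K by blast
    ultimately show "orth G H (indicator S)"
      using orth_prod[OF G H HG \<open>B \<in> sets M\<close> hyp[OF \<open>B \<in> K\<close>] \<open>D \<in> sets H\<close>] by simp
  qed
qed

end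



locale dagp = prob_space M for M :: "'a measure" +
  fixes X :: "'v \<Rightarrow> 'a \<Rightarrow> real" and V :: "'v set"
  assumes Xm: "\<And>v. v \<in> V \<Longrightarrow> X v \<in> borel_measurable M"
begin

definition gens :: "'v set \<Rightarrow> 'a set set" where
  "gens S = (\<Union>v\<in>S. {X v -` B \<inter> space M | B. B \<in> sets borel})"

lemma gens_Pow: "gens S \<subseteq> Pow (space M)"
  unfolding gens_def by auto

lemma gens_sets: "S \<subseteq> V \<Longrightarrow> gens S \<subseteq> sets M"
  unfolding gens_def using Xm by (auto intro!: measurable_sets)

lemma gen_eq: "gen M X S = sigma (space M) (gens S)"
  unfolding gen_def gens_def by simp

lemma space_gen[simp]: "space (gen M X S) = space M"
  unfolding gen_eq using gens_Pow by simp

lemma sets_gen: "sets (gen M X S) = sigma_sets (space M) (gens S)"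
  unfolding gen_eq using gens_Pow by simp

lemma sets_gen_M: "S \<subseteq> V \<Longrightarrow> sets (gen M X S) \<subseteq> sets M"
  unfolding sets_gen using gens_sets
  by (metis sets.sigma_sets_subset)

lemma subalg_gen: "S \<subseteq> V \<Longrightarrow> subalgebra M (gen M X S)"
  unfolding subalgebra_def using sets_gen_M by simp

lemma gen_mono: "S \<subseteq> T \<Longrightarrow> sets (gen M X S) \<subseteq> sets (gen M X T)"
  unfolding sets_gen gens_def by (intro sigma_sets_mono') auto

lemma subalg_gen2: "S \<subseteq> T \<Longrightarrow> subalgebra (gen M X T) (gen M X S)"
  unfolding subalgebra_def using gen_mono by simp

lemma X_meas_gen: "v \<in> S \<Longrightarrow> X v \<in> borel_measurable (gen M X S)"
proof (rule measurableI)
  fix B :: "real set" assume "v \<in> S" "B \<in> sets borel"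
  then have "X v -` B \<inter> space M \<in> gens S" unfolding gens_def by auto
  then show "X v -` B \<inter> space (gen M X S) \<in> sets (gen M X S)"
    unfolding sets_gen by auto
qed auto

lemma fin_sub: "S \<subseteq> V \<Longrightarrow> finite_measure_subalgebra M (gen M X S)"
  unfolding finite_measure_subalgebra_def finite_measure_subalgebra_axioms_def
  using subalg_gen by (simp add: finite_measure_axioms)

lemma sfs: "S \<subseteq> V \<Longrightarrow> sigma_finite_subalgebra M (gen M X S)"
  using fin_sub finite_measure_subalgebra.axioms finite_measure_subalgebra_is_sigma_finite by blast

lemma meas_gen_M: "S \<subseteq> V \<Longrightarrow> f \<in> borel_measurable (gen M X S) \<Longrightarrow> f \<in> borel_measurable M"
  using measurable_from_subalg subalg_gen by blast

lemma meas_gen_mono: "S \<subseteq> T \<Longrightarrow> f \<in> borel_measurable (gen M X S) \<Longrightarrow> f \<in> borel_measurable (gen M X T)"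
  using measurable_from_subalg subalg_gen2 by blast


lemma gens_in_gen: "gens S \<subseteq> sets (gen M X S)"
  unfolding sets_gen by auto

lemma space_in_gens: "v \<in> S \<Longrightarrow> space M \<in> gens S"
  unfolding gens_def by (auto intro!: bexI[of _ v] exI[of _ UNIV])

lemma Kv_Int_stable: "Int_stable (gens {v})"
  unfolding Int_stable_def gens_def
proof (clarsimp)
  fix B1 B2 :: "real set" assume "B1 \<in> sets borel" "B2 \<in> sets borel"
  then show "\<exists>B. X v -` B1 \<inter> space M \<inter> (X v -` B2 \<inter> space M) = X v -` B \<inter> space M \<and> B \<in> sets borel"
    by (intro exI[of _ "B1 \<inter> B2"]) auto
qed

lemma sets_gen_insert:
  "sets (gen M X (insert v R)) = sigma_sets (space M) {B \<inter> D | B D. B \<in> gens {v} \<and> D \<in> sets (gen M X R)}"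
proof
  let ?P = "{B \<inter> D | B D. B \<in> gens {v} \<and> D \<in> sets (gen M X R)}"
  have "gens (insert v R) \<subseteq> ?P"
  proof
    fix S assume "S \<in> gens (insert v R)"
    then obtain w B where w: "w \<in> insert v R" "B \<in> sets borel" "S = X w -` B \<inter> space M"
      unfolding gens_def by auto
    show "S \<in> ?P"
    proof (cases "w = v")
      case True
      have "S = S \<inter> space M" using w by auto
      moreover have "S \<in> gens {v}" using w True unfolding gens_def by auto
      moreover have "space M \<in> sets (gen M X R)" using sets.top[of "gen M X R"] by simp
      ultimately show ?thesis by blast
    next
      case False
      then have "w \<in> R" using w by auto
      then have "S \<in> gens R" using w unfolding gens_def by auto
      then have "S \<in> sets (gen M X R)" using gens_in_gen by auto
      moreover have "S = space M \<inter> S" using w by auto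
      moreover have "space M \<in> gens {v}" using space_in_gens by auto
      ultimately show ?thesis by blast
    qed
  qed
  then show "sets (gen M X (insert v R)) \<subseteq> sigma_sets (space M) ?P"
    unfolding sets_gen by (rule sigma_sets_mono')
  have "?P \<subseteq> sets (gen M X (insert v R))"
  proof
    fix S assume "S \<in> ?P"
    then obtain B D where "S = B \<inter> D" "B \<in> gens {v}" "D \<in> sets (gen M X R)" by auto
    moreover have "B \<in> sets (gen M X (insert v R))"
      using \<open>B \<in> gens {v}\<close> gens_in_gen[of "insert v R"] unfolding gens_def by auto
    moreover have "D \<in> sets (gen M X (insert v R))"
      using \<open>D \<in> sets (gen M X R)\<close> gen_mono[of R "insert v R"] by auto
    ultimately show "S \<in> sets (gen M X (insert v R))" by auto
  qed
  then show "sigma_sets (space M) ?P \<subseteq> sets (gen M X (insert v R))"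
    unfolding sets_gen by (rule sigma_sets_mono)
qed

lemma ci_gen:
  assumes v: "v \<in> V" and RW: "R \<subseteq> W" and WV: "W \<subseteq> V"
    and hyp: "\<And>B. B \<in> sets borel \<Longrightarrow> AE x in M. real_cond_exp M (gen M X W) (\<lambda>\<omega>. indicator B (X v \<omega>)) x
                                      = real_cond_exp M (gen M X R) (\<lambda>\<omega>. indicator B (X v \<omega>)) x"
    and f: "integrable M f" and fm: "f \<in> borel_measurable (gen M X (insert v R))"
  shows "AE x in M. real_cond_exp M (gen M X W) f x = real_cond_exp M (gen M X R) f x"
proof (rule ci_ext[where K="gens {v}" and L="gen M X (insert v R)"])
  show "subalgebra M (gen M X W)" using subalg_gen WV by auto
  show "subalgebra M (gen M X R)" using subalg_gen WV RW by auto
  show "sets (gen M X R) \<subseteq> sets (gen M X W)" using gen_mono RW by auto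
  show "gens {v} \<subseteq> sets M" using gens_sets v by auto
  show "Int_stable (gens {v})" by (rule Kv_Int_stable)
  show "space (gen M X (insert v R)) = space M" by simp
  show "sets (gen M X (insert v R)) = sigma_sets (space M) {B \<inter> D |B D. B \<in> gens {v} \<and> D \<in> sets (gen M X R)}"
    by (rule sets_gen_insert)
  show "integrable M f" by fact
  show "f \<in> borel_measurable (gen M X (insert v R))" by fact
  fix S assume "S \<in> gens {v}"
  then obtain B where B: "B \<in> sets borel" "S = X v -` B \<inter> space M" unfolding gens_def by auto
  have Xv[measurable]: "X v \<in> borel_measurable M" using Xm v by auto
  have eq: "AE x in M. indicator S x = indicator B (X v x)" using B by (intro AE_I2) (auto split: split_indicator)
  have SM: "S \<in> sets M" using B Xv by (auto intro: measurable_sets)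
  have m1: "indicator S \<in> borel_measurable M" using SM by (rule borel_measurable_indicator)
  have m2: "(\<lambda>x. indicator B (X v x) :: real) \<in> borel_measurable M" using B by measurable
  have "AE x in M. real_cond_exp M (gen M X W) (indicator S) x = real_cond_exp M (gen M X W) (\<lambda>\<omega>. indicator B (X v \<omega>)) x"
    using sigma_finite_subalgebra.real_cond_exp_cong[OF sfs[OF WV] eq m1 m2] .
  moreover have "AE x in M. real_cond_exp M (gen M X R) (indicator S) x = real_cond_exp M (gen M X R) (\<lambda>\<omega>. indicator B (X v \<omega>)) x"
    using sigma_finite_subalgebra.real_cond_exp_cong[OF sfs eq m1 m2] RW WV by auto
  ultimately show "AE x in M. real_cond_exp M (gen M X W) (indicator S) x = real_cond_exp M (gen M X R) (indicator S) x"
    using hyp[OF B(1)] by eventually_elim auto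
qed

end




context dagp
begin

lemma subst_set:
  assumes "S \<in> sets (gen M X (insert A R))"
  shows "\<exists>C \<in> sets (gen M X R). S \<inter> {\<omega>\<in>space M. X A \<omega> = a} = C \<inter> {\<omega>\<in>space M. X A \<omega> = a}"
proof -
  let ?EA = "{\<omega>\<in>space M. X A \<omega> = a}"
  have "S \<in> sigma_sets (space M) (gens (insert A R))" using assms unfolding sets_gen .
  then show ?thesis
  proof (induction rule: sigma_sets.induct)
    case (Basic S)
    then obtain w B where w: "w \<in> insert A R" "B \<in> sets borel" "S = X w -` B \<inter> space M"
      unfolding gens_def by auto
    show ?case
    proof (cases "w = A")
      case True
      show ?thesis
      proof (cases "a \<in> B")
        case True
        then show ?thesis using w \<open>w = A\<close> sets.top[of "gen M X R"] by (intro bexI[of _ "space M"]) auto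
      next
        case False
        then show ?thesis using w \<open>w = A\<close> by (intro bexI[of _ "{}"]) auto
      qed
    next
      case False
      then have "S \<in> gens R" using w unfolding gens_def by auto
      then show ?thesis using gens_in_gen by blast
    qed
  next
    case Empty
    then show ?case by (intro bexI[of _ "{}"]) auto
  next
    case (Compl S)
    then obtain C where C: "C \<in> sets (gen M X R)" "S \<inter> ?EA = C \<inter> ?EA" by auto
    have "space M - C \<in> sets (gen M X R)" using C(1) sets.compl_sets[of C "gen M X R"] by simp
    moreover have "(space M - S) \<inter> ?EA = (space M - C) \<inter> ?EA" using C(2) by blast
    ultimately show ?case by blast
  next
    case (Union S)
    then have "\<forall>i. \<exists>C. C \<in> sets (gen M X R) \<and> S i \<inter> ?EA = C \<inter> ?EA" by blast
    then obtain C where C: "\<And>i. C i \<in> sets (gen M X R)" "\<And>i. S i \<inter> ?EA = C i \<inter> ?EA" by metis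
    have "(\<Union>i. C i) \<in> sets (gen M X R)" using C(1) by blast
    moreover have "(\<Union>i. S i) \<inter> ?EA = (\<Union>i. C i) \<inter> ?EA" using C(2) by blast
    ultimately show ?case by blast
  qed
qed

lemma subst_fun:
  fixes g :: "'a \<Rightarrow> real"
  assumes g: "g \<in> borel_measurable (gen M X (insert A R))"
  shows "\<exists>g' \<in> borel_measurable (gen M X R). \<forall>\<omega>\<in>space M. X A \<omega> = a \<longrightarrow> g \<omega> = g' \<omega>"
proof -
  let ?L = "gen M X (insert A R)"
  let ?EA = "{\<omega>\<in>space M. X A \<omega> = a}"
  obtain F where F: "\<And>i. simple_function ?L (F i)" "\<And>x. x \<in> space ?L \<Longrightarrow> (\<lambda>i. F i x) \<longlonglongrightarrow> g x"
    using borel_measurable_implies_sequence_metric[OF g, of 0] by blast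
  define C where "C i y = (SOME C. C \<in> sets (gen M X R) \<and> (F i -` {y} \<inter> space M) \<inter> ?EA = C \<inter> ?EA)" for i y
  have Cex: "\<exists>C. C \<in> sets (gen M X R) \<and> (F i -` {y} \<inter> space M) \<inter> ?EA = C \<inter> ?EA" for i y
  proof -
    have "F i -` {y} \<inter> space M \<in> sets ?L" using simple_functionD(2)[OF F(1)] by simp
    from subst_set[OF this, of a] obtain C' where "C' \<in> sets (gen M X R)"
      "(F i -` {y} \<inter> space M) \<inter> ?EA = C' \<inter> ?EA" by blast
    then show ?thesis by blast
  qed
  have C: "C i y \<in> sets (gen M X R)" "(F i -` {y} \<inter> space M) \<inter> ?EA = C i y \<inter> ?EA" for i y
    using someI_ex[OF Cex[of i y]] unfolding C_def by blast+
  define s where "s i \<omega> = (\<Sum>y\<in>F i ` space M. y * indicator (C i y) \<omega>)" for i \<omega>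
  have sm: "s i \<in> borel_measurable (gen M X R)" for i
    unfolding s_def using C(1) by measurable
  define g' where "g' \<omega> = lim (\<lambda>i. s i \<omega>)" for \<omega>
  have "g' \<in> borel_measurable (gen M X R)" unfolding g'_def using sm by measurable
  moreover have "g \<omega> = g' \<omega>" if "\<omega> \<in> space M" "X A \<omega> = a" for \<omega>
  proof -
    have "s i \<omega> = F i \<omega>" for i
    proof -
      have eq: "F i \<omega> = (\<Sum>y\<in>F i ` space M. indicator (F i -` {y} \<inter> space M) \<omega> *\<^sub>R y)"
        by (rule simple_function_indicator_representation_banach[OF F(1), unfolded space_gen]) (rule that(1))
      have "indicator (C i y) \<omega> = (indicator (F i -` {y} \<inter> space M) \<omega> :: real)" for y
      proof -
        have "\<omega> \<in> C i y \<longleftrightarrow> \<omega> \<in> F i -` {y} \<inter> space M"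
          using C(2)[of i y] that by blast
        then show ?thesis by (simp add: indicator_def)
      qed
      then show ?thesis unfolding s_def eq real_scaleR_def
        by (intro sum.cong refl) (simp add: mult.commute)
    qed
    then have "(\<lambda>i. s i \<omega>) \<longlonglongrightarrow> g \<omega>" using F(2)[of \<omega>] that by simp
    then show ?thesis unfolding g'_def by (simp add: limI)
  qed
  ultimately show ?thesis by blast
qed

lemma lm_tower:
  assumes lm: "local_markov M V E X" and EV: "E \<subseteq> V \<times> V" and v: "v \<in> V"
    and H: "pa E v \<subseteq> H" "H \<subseteq> nd V E v" and B: "B \<in> sets borel"
  shows "AE x in M. real_cond_exp M (gen M X H) (\<lambda>\<omega>. indicator B (X v \<omega>)) x
                  = real_cond_exp M (gen M X (pa E v)) (\<lambda>\<omega>. indicator B (X v \<omega>)) x"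
proof -
  let ?f = "\<lambda>\<omega>. indicator B (X v \<omega>) :: real"
  have ndV: "nd V E v \<subseteq> V" unfolding nd_def by auto
  have paV: "pa E v \<subseteq> V" using EV unfolding pa_def by auto
  have HV: "H \<subseteq> V" using H ndV by auto
  interpret Hs: sigma_finite_subalgebra M "gen M X H" using sfs[OF HV] .
  have Xv[measurable]: "X v \<in> borel_measurable M" using Xm v by auto
  have fm: "?f \<in> borel_measurable M" using B by measurable
  have fi: "integrable M ?f"
    by (rule integrable_bdd[where B=1]) (use fm in \<open>auto split: split_indicator\<close>)
  have 1: "AE x in M. real_cond_exp M (gen M X H) (real_cond_exp M (gen M X (nd V E v)) ?f) x
              = real_cond_exp M (gen M X H) ?f x"
    by (rule Hs.real_cond_exp_nested_subalg[OF subalg_gen[OF ndV] subalg_gen2[OF H(2)] fi])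
  have 2: "AE x in M. real_cond_exp M (gen M X (nd V E v)) ?f x = real_cond_exp M (gen M X (pa E v)) ?f x"
    using lm v B unfolding local_markov_def by auto
  have 3: "AE x in M. real_cond_exp M (gen M X H) (real_cond_exp M (gen M X (nd V E v)) ?f) x
              = real_cond_exp M (gen M X H) (real_cond_exp M (gen M X (pa E v)) ?f) x"
    by (rule Hs.real_cond_exp_cong[OF 2]) (auto intro: borel_measurable_cond_exp2)
  have 4: "AE x in M. real_cond_exp M (gen M X H) (real_cond_exp M (gen M X (pa E v)) ?f) x
              = real_cond_exp M (gen M X (pa E v)) ?f x"
  proof (rule Hs.real_cond_exp_F_meas)
    show "integrable M (real_cond_exp M (gen M X (pa E v)) ?f)"
      using sigma_finite_subalgebra.real_cond_exp_int(1)[OF sfs[OF paV] fi] .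
    show "real_cond_exp M (gen M X (pa E v)) ?f \<in> borel_measurable (gen M X H)"
      using meas_gen_mono[OF H(1) borel_measurable_cond_exp] .
  qed
  from 1 3 4 show ?thesis by eventually_elim auto
qed

lemma ci_local:
  assumes lm: "local_markov M V E X" and EV: "E \<subseteq> V \<times> V" and v: "v \<in> V"
    and R: "pa E v \<subseteq> R" "R \<subseteq> W" "W \<subseteq> nd V E v"
    and f: "integrable M f" and fm: "f \<in> borel_measurable (gen M X (insert v R))"
  shows "AE x in M. real_cond_exp M (gen M X W) f x = real_cond_exp M (gen M X R) f x"
proof (rule ci_gen[OF v R(2) _ _ f fm])
  show "W \<subseteq> V" using R(3) unfolding nd_def by auto
  fix B :: "real set" assume B: "B \<in> sets borel"
  have "AE x in M. real_cond_exp M (gen M X W) (\<lambda>\<omega>. indicator B (X v \<omega>)) x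
                  = real_cond_exp M (gen M X (pa E v)) (\<lambda>\<omega>. indicator B (X v \<omega>)) x"
    by (rule lm_tower[OF lm EV v _ R(3) B]) (use R in auto)
  moreover have "AE x in M. real_cond_exp M (gen M X R) (\<lambda>\<omega>. indicator B (X v \<omega>)) x
                  = real_cond_exp M (gen M X (pa E v)) (\<lambda>\<omega>. indicator B (X v \<omega>)) x"
    by (rule lm_tower[OF lm EV v R(1) _ B]) (use R in auto)
  ultimately show "AE x in M. real_cond_exp M (gen M X W) (\<lambda>\<omega>. indicator B (X v \<omega>)) x
                  = real_cond_exp M (gen M X R) (\<lambda>\<omega>. indicator B (X v \<omega>)) x"
    by eventually_elim auto
qed

end



definition ancestral :: "'v set \<Rightarrow> ('v \<times> 'v) set \<Rightarrow> 'v set \<Rightarrow> bool" where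
  "ancestral V E P \<longleftrightarrow> P \<subseteq> V \<and> (\<forall>u\<in>P. pa E u \<subseteq> P)"

lemma ancestral_rtrancl:
  assumes "ancestral V E P" "(x, w) \<in> E\<^sup>*" "w \<in> P"
  shows "x \<in> P"
  using assms(2,3)
proof (induction rule: converse_rtrancl_induct)
  case base
  then show ?case .
next
  case (step x y)
  then have "y \<in> P" by auto
  then show ?case using assms(1) step(1) unfolding ancestral_def pa_def by auto
qed

lemma exists_min:
  assumes dag: "is_dag V E" and P: "ancestral V E P" "P \<noteq> V"
  shows "\<exists>v \<in> V - P. pa E v \<subseteq> P"
proof -
  have fVV: "finite (V \<times> V)" using dag unfolding is_dag_def by simp
  have fin: "finite E" using dag fVV unfolding is_dag_def using finite_subset by blast
  have wfE: "wf E" using finite_acyclic_wf[OF fin] dag unfolding is_dag_def by auto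
  obtain x where x: "x \<in> V - P" using P unfolding ancestral_def by auto
  obtain z where z: "z \<in> V - P" "\<And>y. (y, z) \<in> E \<Longrightarrow> y \<notin> V - P"
    using wfE_min[OF wfE x] by blast
  have "pa E z \<subseteq> P"
  proof
    fix y assume "y \<in> pa E z"
    then have "(y, z) \<in> E" unfolding pa_def by auto
    then have "y \<in> V" using dag unfolding is_dag_def by auto
    then show "y \<in> P" using z(2) \<open>(y, z) \<in> E\<close> by auto
  qed
  then show ?thesis using z(1) by auto
qed

lemma min_nd:
  assumes P: "ancestral V E P" and v: "v \<notin> P"
  shows "P \<subseteq> nd V E v"
proof
  fix w assume w: "w \<in> P"
  have "w \<notin> de E v"
  proof
    assume "w \<in> de E v"
    then have "(v, w) \<in> E\<^sup>*" unfolding de_def by auto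
    then have "v \<in> P" using ancestral_rtrancl[OF P _ w] by auto
    then show False using v by auto
  qed
  then show "w \<in> nd V E v" using w P unfolding nd_def ancestral_def by auto
qed

lemma ancestral_insert:
  assumes "ancestral V E P" "v \<in> V" "pa E v \<subseteq> P"
  shows "ancestral V E (insert v P)"
  using assms unfolding ancestral_def by auto

lemma ancestral_V: "is_dag V E \<Longrightarrow> ancestral V E V"
  unfolding ancestral_def is_dag_def pa_def by auto

definition Tset :: "'v set \<Rightarrow> ('v \<times> 'v) set \<Rightarrow> 'v \<Rightarrow> 'v \<Rightarrow> 'v set" where
  "Tset V E A b = {v. (b, v) \<in> (Restr E (V - {A}))\<^sup>*}"

lemma A_notin_T:
  assumes "b \<noteq> A" shows "A \<notin> Tset V E A b"
proof
  assume "A \<in> Tset V E A b"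
  then have "(b, A) \<in> (Restr E (V - {A}))\<^sup>*" unfolding Tset_def by auto
  then show False
  proof (cases rule: rtranclE)
    case base then show False using assms by auto
  next
    case (step y) then show False by auto
  qed
qed

lemma b_in_T: "b \<in> Tset V E A b"
  unfolding Tset_def by auto

lemma T_de: "Tset V E A b \<subseteq> de E b"
  unfolding Tset_def de_def using rtrancl_mono[of "Restr E (V - {A})" E] by auto

lemma pa_notin_T:
  assumes dag: "is_dag V E" and bA: "b \<noteq> A" and v: "v \<in> V" "v \<noteq> A" "v \<notin> Tset V E A b"
  shows "pa E v \<inter> Tset V E A b = {}"
proof (rule ccontr)
  assume "pa E v \<inter> Tset V E A b \<noteq> {}"
  then obtain p where p: "(p, v) \<in> E" "p \<in> Tset V E A b" unfolding pa_def by auto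
  have "p \<in> V" using p dag unfolding is_dag_def by auto
  moreover have "p \<noteq> A" using p(2) A_notin_T[OF bA] by auto
  ultimately have "(p, v) \<in> Restr E (V - {A})" using p(1) v by auto
  moreover have "(b, p) \<in> (Restr E (V - {A}))\<^sup>*" using p(2) unfolding Tset_def by simp
  ultimately have "(b, v) \<in> (Restr E (V - {A}))\<^sup>*" by (rule rtrancl.rtrancl_into_rtrancl[rotated])
  then show False using v(3) unfolding Tset_def by auto
qed

lemma Y_notin_T:
  assumes "b \<in> indir V E A Y" shows "Y \<notin> Tset V E A b"
  using assms unfolding indir_def Tset_def by auto

lemma N_T_disj: "nd V E b \<inter> Tset V E A b = {}"
  using T_de[of V E A b] unfolding nd_def by blast

lemma ancestral_bN:
  assumes dag: "is_dag V E" and b: "b \<in> V"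
  shows "ancestral V E (insert b (nd V E b))"
  unfolding ancestral_def
proof (intro conjI ballI)
  show "insert b (nd V E b) \<subseteq> V" using b unfolding nd_def by auto
  fix u assume u: "u \<in> insert b (nd V E b)"
  show "pa E u \<subseteq> insert b (nd V E b)"
  proof
    fix p assume "p \<in> pa E u"
    then have pu: "(p, u) \<in> E" unfolding pa_def by auto
    then have pV: "p \<in> V" using dag unfolding is_dag_def by auto
    have "p \<notin> de E b"
    proof
      assume "p \<in> de E b"
      then have bp: "(b, p) \<in> E\<^sup>*" unfolding de_def by auto
      show False
      proof (cases "u = b")
        case True
        have "(b, b) \<in> E\<^sup>+" using rtrancl_into_trancl1[OF bp pu] True by simp
        then show False using dag unfolding is_dag_def acyclic_def by auto
      next
        case False
        then have "u \<in> nd V E b" using u by auto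
        moreover have "(b, u) \<in> E\<^sup>*" using bp pu by auto
        ultimately show False unfolding nd_def de_def by auto
      qed
    qed
    then show "p \<in> insert b (nd V E b)" using pV unfolding nd_def by auto
  qed
qed

lemma bN_minus_T: "insert b (nd V E b) - Tset V E A b = nd V E b"
  using N_T_disj[of V E b A] b_in_T[of b V E A] by auto

lemma A_notin_bN:
  assumes "b \<in> indir V E A Y"
  shows "A \<notin> insert b (nd V E b)"
  using assms unfolding indir_def nd_def de_def an_def by auto

lemma pa_b_N:
  assumes dag: "is_dag V E" and b: "b \<in> V"
  shows "pa E b \<subseteq> nd V E b"
proof -
  have "pa E b \<subseteq> insert b (nd V E b)" using ancestral_bN[OF dag b] unfolding ancestral_def by blast
  moreover have "b \<notin> pa E b"
  proof
    assume "b \<in> pa E b"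
    then have "(b, b) \<in> E\<^sup>+" unfolding pa_def by auto
    then show False using dag unfolding is_dag_def acyclic_def by auto
  qed
  ultimately show ?thesis by auto
qed




locale setting = dagp M X V for M :: "'a measure" and X :: "'v \<Rightarrow> 'a \<Rightarrow> real" and V +
  fixes E :: "('v \<times> 'v) set" and A Y b :: 'v and a :: real
  assumes dag: "is_dag V E" and AV: "A \<in> V" and YV: "Y \<in> V" and AY: "A \<noteq> Y"
    and lm: "local_markov M V E X"
    and pos: "AE \<omega> in M. propensity M E X A a \<omega> > 0"
    and Jint: "integrable M (J_fun M E X A a Y)"
    and bind: "b \<in> indir V E A Y"
begin

abbreviation "T \<equiv> Tset V E A b"
abbreviation "ps \<equiv> propensity M E X A a"
abbreviation "J \<equiv> J_fun M E X A a Y"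
definition IY :: "'a \<Rightarrow> real" where "IY \<omega> = indicator {a} (X A \<omega>) * X Y \<omega>"
definition ind :: "'a \<Rightarrow> real" where "ind \<omega> = indicator {a} (X A \<omega>)"

lemma EV: "E \<subseteq> V \<times> V" using dag unfolding is_dag_def by auto
lemma bV: "b \<in> V" using bind unfolding indir_def by auto
lemma bA: "b \<noteq> A" using bind unfolding indir_def by auto
lemma paAV: "pa E A \<subseteq> V" using EV unfolding pa_def by auto
lemma finV: "finite V" using dag unfolding is_dag_def by auto
lemma AT: "A \<notin> T" using A_notin_T[OF bA] .

lemma XA[measurable]: "X A \<in> borel_measurable M" using Xm AV by auto
lemma XY[measurable]: "X Y \<in> borel_measurable M" using Xm YV by auto

lemma ps_gen: "ps \<in> borel_measurable (gen M X (pa E A))"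
  unfolding propensity_def by (rule borel_measurable_cond_exp)
lemma ps_M[measurable]: "ps \<in> borel_measurable M"
  unfolding propensity_def by (rule borel_measurable_cond_exp2)

lemma ind_M[measurable]: "ind \<in> borel_measurable M" unfolding ind_def by measurable
lemma IY_M[measurable]: "IY \<in> borel_measurable M" unfolding IY_def by measurable

lemma ind_gen: "A \<in> S \<Longrightarrow> ind \<in> borel_measurable (gen M X S)"
  unfolding ind_def using X_meas_gen[of A S] by measurable

lemma IY_gen: "A \<in> S \<Longrightarrow> Y \<in> S \<Longrightarrow> IY \<in> borel_measurable (gen M X S)"
  unfolding IY_def using X_meas_gen[of A S] X_meas_gen[of Y S] by measurable

lemma J_eq: "J = (\<lambda>\<omega>. IY \<omega> / ps \<omega>)"
  unfolding J_fun_def IY_def by simp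

lemma ps_le1: "AE \<omega> in M. ps \<omega> \<le> 1"
proof -
  interpret S: sigma_finite_subalgebra M "gen M X (pa E A)" using sfs[OF paAV] .
  have ii: "integrable M ind" by (rule integrable_bdd[where B=1]) (auto simp: ind_def split: split_indicator)
  have "AE x in M. real_cond_exp M (gen M X (pa E A)) ind x \<le> real_cond_exp M (gen M X (pa E A)) (\<lambda>_. 1) x"
    by (rule S.real_cond_exp_mono) (use ii in \<open>auto simp: ind_def split: split_indicator\<close>)
  moreover have "AE x in M. real_cond_exp M (gen M X (pa E A)) (\<lambda>_. 1) x = 1"
    by (rule S.real_cond_exp_F_meas) auto
  ultimately show ?thesis unfolding propensity_def ind_def by eventually_elim auto
qed

lemma IY_int: "integrable M IY"
proof (rule Bochner_Integration.integrable_bound[OF Jint IY_M])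
  show "AE x in M. norm (IY x) \<le> norm (J x)"
    using pos ps_le1
  proof eventually_elim
    case (elim x)
    have "IY x = J x * ps x" unfolding J_eq using elim by simp
    then have "\<bar>IY x\<bar> = \<bar>J x\<bar> * ps x" using elim by (simp add: abs_mult)
    also have "\<dots> \<le> \<bar>J x\<bar> * 1" using elim by (intro mult_left_mono) auto
    finally show ?case by simp
  qed
qed

lemma integrable_ae:
  assumes "integrable M f" "g \<in> borel_measurable M" "AE x in M. f x = g x"
  shows "integrable M g"
  using assms integrable_cong_AE[of f M g] by auto

lemma gstep:
  assumes f: "integrable M f" and P: "ancestral V E P" and v: "v \<in> V" "v \<notin> P" "pa E v \<subseteq> P" "v \<noteq> A"
    and phi: "phi \<in> borel_measurable (gen M X (insert v P - T))"
      "AE x in M. real_cond_exp M (gen M X (insert v P)) f x = phi x"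
  shows "\<exists>psi \<in> borel_measurable (gen M X (P - T)). AE x in M. real_cond_exp M (gen M X P) f x = psi x"
proof -
  have PV: "P \<subseteq> V" using P unfolding ancestral_def by auto
  have P'V: "insert v P \<subseteq> V" using PV v by auto
  interpret SP: sigma_finite_subalgebra M "gen M X P" using sfs[OF PV] .
  interpret SP': sigma_finite_subalgebra M "gen M X (insert v P)" using sfs[OF P'V] .
  have "insert v P - T \<subseteq> V" using P'V by blast
  then have phiM: "phi \<in> borel_measurable M" using meas_gen_M phi(1) by blast
  have phiI: "integrable M phi" by (rule integrable_ae[OF SP'.real_cond_exp_int(1)[OF f] phiM phi(2)])
  have n1: "AE x in M. real_cond_exp M (gen M X P) (real_cond_exp M (gen M X (insert v P)) f) x
            = real_cond_exp M (gen M X P) f x"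
    by (rule SP.real_cond_exp_nested_subalg[OF subalg_gen[OF P'V] subalg_gen2[OF subset_insertI] f])
  have n2: "AE x in M. real_cond_exp M (gen M X P) (real_cond_exp M (gen M X (insert v P)) f) x
            = real_cond_exp M (gen M X P) phi x"
    by (rule SP.real_cond_exp_cong[OF phi(2) borel_measurable_cond_exp2 phiM])
  show ?thesis
  proof (cases "v \<in> T")
    case True
    then have eqs: "insert v P - T = P - T" by auto
    have "phi \<in> borel_measurable (gen M X (P - T))" using phi(1) unfolding eqs .
    then have "phi \<in> borel_measurable (gen M X P)" by (rule meas_gen_mono[rotated]) blast
    then have "AE x in M. real_cond_exp M (gen M X P) phi x = phi x"
      by (rule SP.real_cond_exp_F_meas[OF phiI])
    then have "AE x in M. real_cond_exp M (gen M X P) f x = phi x" using n1 n2 by eventually_elim auto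
    moreover have "phi \<in> borel_measurable (gen M X (P - T))" using phi(1) unfolding eqs .
    ultimately show ?thesis by blast
  next
    case False
    then have eqs: "insert v P - T = insert v (P - T)" by auto
    have paT: "pa E v \<subseteq> P - T" using pa_notin_T[OF dag bA v(1) v(4) False] v(3) by auto
    have phi1: "phi \<in> borel_measurable (gen M X (insert v (P - T)))" using phi(1) unfolding eqs .
    have "AE x in M. real_cond_exp M (gen M X P) phi x = real_cond_exp M (gen M X (P - T)) phi x"
      by (rule ci_local[OF lm EV v(1) paT Diff_subset min_nd[OF P v(2)] phiI phi1])
    then have "AE x in M. real_cond_exp M (gen M X P) f x = real_cond_exp M (gen M X (P - T)) phi x"
      using n1 n2 by eventually_elim auto
    then show ?thesis using borel_measurable_cond_exp[of M "gen M X (P - T)" phi] by blast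
  qed
qed


lemma Astep:
  assumes P: "ancestral V E P" and AP: "A \<notin> P" and paA: "pa E A \<subseteq> P"
    and phi: "phi \<in> borel_measurable (gen M X (insert A P - T))"
      "AE x in M. real_cond_exp M (gen M X (insert A P)) IY x = phi x"
  shows "\<exists>psi \<in> borel_measurable (gen M X (P - T)). AE x in M. real_cond_exp M (gen M X P) J x = psi x"
proof -
  have PV: "P \<subseteq> V" using P unfolding ancestral_def by auto
  have P'V: "insert A P \<subseteq> V" using PV AV by auto
  interpret SP: sigma_finite_subalgebra M "gen M X P" using sfs[OF PV] .
  interpret SP': sigma_finite_subalgebra M "gen M X (insert A P)" using sfs[OF P'V] .
  have eqs: "insert A P - T = insert A (P - T)" using AT by auto
  have phi1: "phi \<in> borel_measurable (gen M X (insert A (P - T)))" using phi(1) unfolding eqs .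
  have "insert A P - T \<subseteq> V" using P'V by blast
  then have phiM: "phi \<in> borel_measurable M" using meas_gen_M phi(1) by blast
  have psP: "ps \<in> borel_measurable (gen M X P)" using meas_gen_mono[OF paA ps_gen] .
  have psP': "ps \<in> borel_measurable (gen M X (insert A P))"
    using meas_gen_mono[OF _ ps_gen, of "insert A P"] paA by blast
  have indP': "ind \<in> borel_measurable (gen M X (insert A P))" by (rule ind_gen) simp
  have Jf: "J = (\<lambda>x. (1 / ps x) * IY x)" unfolding J_eq by (simp add: fun_eq_iff)
  have a: "AE x in M. real_cond_exp M (gen M X (insert A P)) J x = (1 / ps x) * real_cond_exp M (gen M X (insert A P)) IY x"
  proof -
    have m: "(\<lambda>x. 1 / ps x) \<in> borel_measurable (gen M X (insert A P))" using psP' by measurable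
    have i: "integrable M (\<lambda>x. (1 / ps x) * IY x)" using Jint unfolding Jf .
    show ?thesis unfolding Jf by (rule SP'.real_cond_exp_mult[OF m IY_M i])
  qed
  have IYf: "IY = (\<lambda>x. ind x * IY x)" unfolding IY_def ind_def by (simp add: fun_eq_iff split: split_indicator)
  have b: "AE x in M. real_cond_exp M (gen M X (insert A P)) IY x = ind x * real_cond_exp M (gen M X (insert A P)) IY x"
  proof -
    have i: "integrable M (\<lambda>x. ind x * IY x)" using IY_int IYf by simp
    have "AE x in M. real_cond_exp M (gen M X (insert A P)) (\<lambda>x. ind x * IY x) x = ind x * real_cond_exp M (gen M X (insert A P)) IY x"
      by (rule SP'.real_cond_exp_mult[OF indP' IY_M i])
    then show ?thesis using IYf by simp
  qed
  obtain g' where g': "g' \<in> borel_measurable (gen M X (P - T))" "\<And>\<omega>. \<omega> \<in> space M \<Longrightarrow> X A \<omega> = a \<Longrightarrow> phi \<omega> = g' \<omega>"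
    using subst_fun[OF phi1, of a] by blast
  have indg: "ind \<omega> * phi \<omega> = ind \<omega> * g' \<omega>" if "\<omega> \<in> space M" for \<omega>
    using g'(2)[OF that] unfolding ind_def by (auto split: split_indicator)
  define h where "h x = (g' x / ps x) * ind x" for x
  have c: "AE x in M. real_cond_exp M (gen M X (insert A P)) J x = h x"
    using a b phi(2) AE_space
  proof (eventually_elim)
    case (elim x)
    then have "real_cond_exp M (gen M X (insert A P)) J x = (1 / ps x) * (ind x * phi x)" by simp
    also have "\<dots> = (1 / ps x) * (ind x * g' x)" using indg[OF elim(4)] by simp
    also have "\<dots> = h x" unfolding h_def by simp
    finally show ?case .
  qed
  have g'P: "g' \<in> borel_measurable (gen M X P)" using meas_gen_mono[OF Diff_subset g'(1)] .
  have g'M: "g' \<in> borel_measurable M" using meas_gen_M[OF PV g'P] .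
  have hM: "h \<in> borel_measurable M" unfolding h_def
    by (intro borel_measurable_times borel_measurable_divide g'M ps_M ind_M)
  have hI: "integrable M h" by (rule integrable_ae[OF SP'.real_cond_exp_int(1)[OF Jint] hM c])
  have n1: "AE x in M. real_cond_exp M (gen M X P) (real_cond_exp M (gen M X (insert A P)) J) x
            = real_cond_exp M (gen M X P) J x"
    by (rule SP.real_cond_exp_nested_subalg[OF subalg_gen[OF P'V] subalg_gen2[OF subset_insertI] Jint])
  have n2: "AE x in M. real_cond_exp M (gen M X P) (real_cond_exp M (gen M X (insert A P)) J) x
            = real_cond_exp M (gen M X P) h x"
    by (rule SP.real_cond_exp_cong[OF c borel_measurable_cond_exp2 hM])
  have d: "AE x in M. real_cond_exp M (gen M X P) h x = (g' x / ps x) * real_cond_exp M (gen M X P) ind x"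
  proof -
    have m: "(\<lambda>x. g' x / ps x) \<in> borel_measurable (gen M X P)" using g'P psP by measurable
    have i: "integrable M (\<lambda>x. (g' x / ps x) * ind x)" using hI unfolding h_def .
    show ?thesis unfolding h_def by (rule SP.real_cond_exp_mult[OF m ind_M i])
  qed
  have e: "AE x in M. real_cond_exp M (gen M X P) ind x = ps x"
  proof -
    have "AE x in M. real_cond_exp M (gen M X P) (\<lambda>\<omega>. indicator {a} (X A \<omega>)) x
                  = real_cond_exp M (gen M X (pa E A)) (\<lambda>\<omega>. indicator {a} (X A \<omega>)) x"
      by (rule lm_tower[OF lm EV AV paA min_nd[OF P AP]]) simp
    then show ?thesis unfolding ind_def propensity_def by simp
  qed
  have "AE x in M. real_cond_exp M (gen M X P) J x = g' x"
    using n1 n2 d e pos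
  proof eventually_elim
    case (elim x)
    then show ?case by simp
  qed
  then show ?thesis using g'(1) by blast
qed

lemma base: "\<exists>phi \<in> borel_measurable (gen M X (V - T)). AE x in M. real_cond_exp M (gen M X V) IY x = phi x"
proof -
  interpret SV: sigma_finite_subalgebra M "gen M X V" using sfs[OF subset_refl] .
  have "A \<in> V - T" using AV AT by blast
  moreover have "Y \<in> V - T" using YV Y_notin_T[OF bind] by blast
  ultimately have m: "IY \<in> borel_measurable (gen M X (V - T))" by (rule IY_gen)
  then have "IY \<in> borel_measurable (gen M X V)" by (rule meas_gen_mono[rotated]) blast
  then have "AE x in M. real_cond_exp M (gen M X V) IY x = IY x" by (rule SV.real_cond_exp_F_meas[OF IY_int])
  then show ?thesis using m by blast
qed

definition Phi :: "'v set \<Rightarrow> bool" where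
  "Phi P \<longleftrightarrow> (A \<notin> P \<longrightarrow> (\<exists>phi \<in> borel_measurable (gen M X (P - T)). AE x in M. real_cond_exp M (gen M X P) J x = phi x))
           \<and> (A \<in> P \<longrightarrow> (\<exists>phi \<in> borel_measurable (gen M X (P - T)). AE x in M. real_cond_exp M (gen M X P) IY x = phi x))"

lemma main_ind: "ancestral V E P \<Longrightarrow> Phi P"
proof (induction "card (V - P)" arbitrary: P rule: less_induct)
  case less
  show ?case
  proof (cases "P = V")
    case True
    then show ?thesis using base AV unfolding Phi_def by auto
  next
    case False
    obtain v where v: "v \<in> V - P" "pa E v \<subseteq> P" using exists_min[OF dag less.prems False] by blast
    have anc: "ancestral V E (insert v P)" using ancestral_insert[OF less.prems _ v(2)] v(1) by blast
    have "card (V - insert v P) < card (V - P)"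
    proof -
      have eqV: "V - insert v P = (V - P) - {v}" by blast
      have fin: "finite (V - P)" using finV by blast
      show ?thesis unfolding eqV by (rule card_Diff1_less[OF fin v(1)])
    qed
    then have IH: "Phi (insert v P)" using less.hyps anc by blast
    have vV: "v \<in> V" "v \<notin> P" using v(1) by auto
    show ?thesis
    proof (cases "v = A")
      case True
      then obtain phi where "phi \<in> borel_measurable (gen M X (insert A P - T))"
        "AE x in M. real_cond_exp M (gen M X (insert A P)) IY x = phi x"
        using IH unfolding Phi_def by blast
      then have "\<exists>psi \<in> borel_measurable (gen M X (P - T)). AE x in M. real_cond_exp M (gen M X P) J x = psi x"
        using Astep[OF less.prems] vV v(2) True by blast
      then show ?thesis unfolding Phi_def using vV True by blast
    next
      case False
      have c1: "\<exists>psi \<in> borel_measurable (gen M X (P - T)). AE x in M. real_cond_exp M (gen M X P) J x = psi x"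
        if "A \<notin> P"
      proof -
        have "A \<notin> insert v P" using that False by blast
        then obtain phi where "phi \<in> borel_measurable (gen M X (insert v P - T))"
          "AE x in M. real_cond_exp M (gen M X (insert v P)) J x = phi x"
          using IH unfolding Phi_def by blast
        then show ?thesis using gstep[OF Jint less.prems vV v(2) False] by blast
      qed
      have c2: "\<exists>psi \<in> borel_measurable (gen M X (P - T)). AE x in M. real_cond_exp M (gen M X P) IY x = psi x"
        if "A \<in> P"
      proof -
        have "A \<in> insert v P" using that by blast
        then obtain phi where "phi \<in> borel_measurable (gen M X (insert v P - T))"
          "AE x in M. real_cond_exp M (gen M X (insert v P)) IY x = phi x"
          using IH unfolding Phi_def by blast
        then show ?thesis using gstep[OF IY_int less.prems vV v(2) False] by blast
      qed
      show ?thesis unfolding Phi_def using c1 c2 by blast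
    qed
  qed
qed


lemma final:
  "AE \<omega> in M. real_cond_exp M (gen M X (insert b (pa E b))) J \<omega> - real_cond_exp M (gen M X (pa E b)) J \<omega> = 0"
proof -
  define N where "N = nd V E b"
  define S where "S = pa E b"
  have NV: "N \<subseteq> V" unfolding N_def nd_def by auto
  have SN: "S \<subseteq> N" unfolding S_def N_def by (rule pa_b_N[OF dag bV])
  have SV: "S \<subseteq> V" using SN NV by auto
  have P0V: "insert b N \<subseteq> V" using NV bV by auto
  have bSV: "insert b S \<subseteq> V" using SV bV by auto
  have bSP0: "insert b S \<subseteq> insert b N" using SN by auto
  have SP0: "S \<subseteq> insert b N" using SN by auto
  interpret SN: sigma_finite_subalgebra M "gen M X N" using sfs[OF NV] .
  interpret SS: sigma_finite_subalgebra M "gen M X S" using sfs[OF SV] .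
  interpret SbS: sigma_finite_subalgebra M "gen M X (insert b S)" using sfs[OF bSV] .
  interpret SP0: sigma_finite_subalgebra M "gen M X (insert b N)" using sfs[OF P0V] .
  have "Phi (insert b N)" unfolding N_def by (rule main_ind[OF ancestral_bN[OF dag bV]])
  moreover have "A \<notin> insert b N" unfolding N_def by (rule A_notin_bN[OF bind])
  moreover have "insert b N - T = N" unfolding N_def by (rule bN_minus_T)
  ultimately obtain phi where phi: "phi \<in> borel_measurable (gen M X N)"
    "AE x in M. real_cond_exp M (gen M X (insert b N)) J x = phi x"
    unfolding Phi_def by auto
  have phiM: "phi \<in> borel_measurable M" using meas_gen_M[OF NV phi(1)] .
  have phiI: "integrable M phi" by (rule integrable_ae[OF SP0.real_cond_exp_int(1)[OF Jint] phiM phi(2)])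
  have 1: "AE x in M. real_cond_exp M (gen M X (insert b S)) J x = real_cond_exp M (gen M X (insert b S)) phi x"
  proof -
    have "AE x in M. real_cond_exp M (gen M X (insert b S)) (real_cond_exp M (gen M X (insert b N)) J) x
            = real_cond_exp M (gen M X (insert b S)) J x"
      by (rule SbS.real_cond_exp_nested_subalg[OF subalg_gen[OF P0V] subalg_gen2[OF bSP0] Jint])
    moreover have "AE x in M. real_cond_exp M (gen M X (insert b S)) (real_cond_exp M (gen M X (insert b N)) J) x
            = real_cond_exp M (gen M X (insert b S)) phi x"
      by (rule SbS.real_cond_exp_cong[OF phi(2) borel_measurable_cond_exp2 phiM])
    ultimately show ?thesis by eventually_elim auto
  qed
  have 2: "AE x in M. real_cond_exp M (gen M X S) J x = real_cond_exp M (gen M X S) phi x"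
  proof -
    have "AE x in M. real_cond_exp M (gen M X S) (real_cond_exp M (gen M X (insert b N)) J) x
            = real_cond_exp M (gen M X S) J x"
      by (rule SS.real_cond_exp_nested_subalg[OF subalg_gen[OF P0V] subalg_gen2[OF SP0] Jint])
    moreover have "AE x in M. real_cond_exp M (gen M X S) (real_cond_exp M (gen M X (insert b N)) J) x
            = real_cond_exp M (gen M X S) phi x"
      by (rule SS.real_cond_exp_cong[OF phi(2) borel_measurable_cond_exp2 phiM])
    ultimately show ?thesis by eventually_elim auto
  qed
  have 3: "AE x in M. real_cond_exp M (gen M X (insert b S)) phi x = real_cond_exp M (gen M X S) phi x"
  proof (rule SbS.real_cond_exp_charact)
    show "integrable M phi" by (rule phiI)
    show "integrable M (real_cond_exp M (gen M X S) phi)" by (rule SS.real_cond_exp_int(1)[OF phiI])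
    show "real_cond_exp M (gen M X S) phi \<in> borel_measurable (gen M X (insert b S))"
      by (rule meas_gen_mono[OF subset_insertI borel_measurable_cond_exp])
    fix C assume C: "C \<in> sets (gen M X (insert b S))"
    then have CM: "C \<in> sets M" using sets_gen_M[OF bSV] by blast
    have indC: "integrable M (indicator C :: 'a \<Rightarrow> real)" using integrable_ind[OF CM] .
    have indCm: "(indicator C :: 'a \<Rightarrow> real) \<in> borel_measurable (gen M X (insert b S))"
      using C by (rule borel_measurable_indicator)
    have ci: "AE x in M. real_cond_exp M (gen M X N) (indicator C) x = real_cond_exp M (gen M X S) (indicator C) x"
      by (rule ci_local[OF lm EV bV _ SN _ indC indCm]) (auto simp: S_def N_def)
    have "(\<integral>x\<in>C. phi x \<partial>M) = (\<integral>x. phi x * indicator C x \<partial>M)"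
      by (simp add: set_lebesgue_integral_def mult.commute)
    also have "\<dots> = (\<integral>x. phi x * real_cond_exp M (gen M X N) (indicator C) x \<partial>M)"
    proof (rule SN.real_cond_exp_intg(2)[symmetric])
      show "integrable M (\<lambda>x. phi x * indicator C x)" using CM phiI by (rule integrable_real_mult_indicator)
      show "phi \<in> borel_measurable (gen M X N)" by (rule phi(1))
      show "indicator C \<in> borel_measurable M" using CM by (rule borel_measurable_indicator)
    qed
    also have "\<dots> = (\<integral>x. phi x * real_cond_exp M (gen M X S) (indicator C) x \<partial>M)"
      using ci by (intro integral_cong_AE) (auto intro: borel_measurable_times phiM borel_measurable_cond_exp2)
    also have "\<dots> = (\<integral>x. real_cond_exp M (gen M X S) (indicator C) x * phi x \<partial>M)"
      by (simp add: mult.commute)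
    also have "\<dots> = (\<integral>x. indicator C x * real_cond_exp M (gen M X S) phi x \<partial>M)"
      by (rule cond_swap[OF subalg_gen[OF SV] phiI CM, symmetric])
    also have "\<dots> = (\<integral>x\<in>C. real_cond_exp M (gen M X S) phi x \<partial>M)"
      by (simp add: set_lebesgue_integral_def)
    finally show "(\<integral>x\<in>C. phi x \<partial>M) = (\<integral>x\<in>C. real_cond_exp M (gen M X S) phi x \<partial>M)" .
  qed
  from 1 2 3 show ?thesis unfolding S_def by eventually_elim auto
qed

end

theorem proposition3:
  fixes M :: "'a measure" and V :: "'v set" and E :: "('v \<times> 'v) set"
    and X :: "'v \<Rightarrow> 'a \<Rightarrow> real" and A Y Vj :: 'v and a :: real
  assumes "prob_space M"
    and "is_dag V E"
    and "A \<in> V" and "Y \<in> V" and "A \<noteq> Y"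
    and "\<And>v. v \<in> V \<Longrightarrow> X v \<in> borel_measurable M"
    and "countable (X A ` space M)"
    and "local_markov M V E X"
    and "AE \<omega> in M. propensity M E X A a \<omega> > 0"
    and "integrable M (J_fun M E X A a Y)"
    and "Vj \<in> indir V E A Y"
  shows "AE \<omega> in M.
           real_cond_exp M (gen M X (insert Vj (pa E Vj))) (J_fun M E X A a Y) \<omega>
         - real_cond_exp M (gen M X (pa E Vj)) (J_fun M E X A a Y) \<omega> = 0"
proof -
  interpret setting M X V E A Y Vj a
    by (intro setting.intro dagp.intro dagp_axioms.intro setting_axioms.intro) (use assms in auto)
  show ?thesis by (rule final)
qed



end
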